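(* Let $S=\{v_1,\ldots,v_n\}\subset\mathbb Z^n$ be an orthogonal subset with Wu element $W=\sum_{i=1}^n v_i=\sum_{i=1}^n k_ie_i$, and let $R_o=\{i: k_i\equiv1\pmod2\}$. If $I(S)>n-3|R_o|$, then the lattice generated by $S$ is not cubiquitous.
   Context: $\mathbb Z^n$ carries the standard dot product with standard basis $e_1,\ldots,e_n$. $a_i=\langle v_i,v_i\rangle$ and $I(S)=\sum_{i=1}^n(a_i-3)$. $S$ is orthogonal if $a_i\ge1$ for all $i$ and $\langle v_i,v_j\rangle=0$ for all $i\ne j$. A full-rank sublattice $\Lambda\subset\mathbb Z^n$ is cubiquitous if $\Lambda\cap(x+\{0,1\}^n)\ne\emptyset$ for every $x\in\mathbb Z^n$. *)

theory Defs
  imports "HOL-Analysis.Analysis"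
begin

text \<open>Z^n is rendered as int ^ 'n, with the finite type 'n indexing both the
  coordinates and the elements v_1..v_n of S.\<close>

definition zdot :: "int ^ 'n::finite \<Rightarrow> int ^ 'n \<Rightarrow> int" where
  "zdot x y = (\<Sum>j\<in>UNIV. x $ j * y $ j)"

definition orthogonal_family :: "('n::finite \<Rightarrow> int ^ 'n) \<Rightarrow> bool" where
  "orthogonal_family v \<longleftrightarrow>
     (\<forall>i. zdot (v i) (v i) \<ge> 1) \<and> (\<forall>i j. i \<noteq> j \<longrightarrow> zdot (v i) (v j) = 0)"

definition I_S :: "('n::finite \<Rightarrow> int ^ 'n) \<Rightarrow> int" where
  "I_S v = (\<Sum>i\<in>UNIV. zdot (v i) (v i) - 3)"

definition wu_element :: "('n::finite \<Rightarrow> int ^ 'n) \<Rightarrow> int ^ 'n" where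
  "wu_element v = (\<Sum>i\<in>UNIV. v i)"

definition lattice_gen :: "('n::finite \<Rightarrow> int ^ 'n) \<Rightarrow> (int ^ 'n) set" where
  "lattice_gen v = {x. \<exists>c :: 'n \<Rightarrow> int. x = (\<Sum>i\<in>UNIV. c i *s v i)}"

definition cubiquitous :: "(int ^ 'n::finite) set \<Rightarrow> bool" where
  "cubiquitous L \<longleftrightarrow>
     (\<forall>x :: int ^ 'n. \<exists>y\<in>L. \<forall>j. y $ j - x $ j \<in> {0, 1})"

end

theory Submission
  imports Defs
begin

lemma norm_lower:
  fixes v :: "'n::finite \<Rightarrow> int ^ 'n" and u :: "'n \<Rightarrow> int"
  assumes orth: "orthogonal_family v" and odd: "\<And>i. odd (u i)"
  shows "(\<Sum>j\<in>UNIV. (\<Sum>i\<in>UNIV. u i * v i $ j)^2) \<ge> (\<Sum>i\<in>UNIV. zdot (v i) (v i))"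
proof -
  have "(\<Sum>j\<in>UNIV. (\<Sum>i\<in>UNIV. u i * v i $ j)^2)
      = (\<Sum>j\<in>UNIV. \<Sum>i\<in>UNIV. \<Sum>k\<in>UNIV. u i * u k * (v i $ j * v k $ j))"
    by (simp add: power2_eq_square sum_product algebra_simps)
  also have "\<dots> = (\<Sum>i\<in>UNIV. \<Sum>k\<in>UNIV. u i * u k * zdot (v i) (v k))"
  proof -
    have "(\<Sum>j\<in>UNIV. \<Sum>i\<in>UNIV. \<Sum>k\<in>UNIV. u i * u k * (v i $ j * v k $ j))
        = (\<Sum>i\<in>UNIV. \<Sum>j\<in>UNIV. \<Sum>k\<in>UNIV. u i * u k * (v i $ j * v k $ j))"
      by (rule sum.swap)
    also have "\<dots> = (\<Sum>i\<in>UNIV. \<Sum>k\<in>UNIV. \<Sum>j\<in>UNIV. u i * u k * (v i $ j * v k $ j))"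
      by (rule sum.cong[OF refl], rule sum.swap)
    finally show ?thesis unfolding zdot_def sum_distrib_left .
  qed
  also have "\<dots> = (\<Sum>i\<in>UNIV. u i * u i * zdot (v i) (v i))"
  proof (rule sum.cong[OF refl])
    fix i
    show "(\<Sum>k\<in>UNIV. u i * u k * zdot (v i) (v k)) = u i * u i * zdot (v i) (v i)"
      by (subst sum.remove[of UNIV i]) (use orth in \<open>auto simp: orthogonal_family_def\<close>)
  qed
  also have "\<dots> \<ge> (\<Sum>i\<in>UNIV. zdot (v i) (v i))"
  proof (rule sum_mono)
    fix i
    have a: "zdot (v i) (v i) \<ge> 1" using orth by (auto simp: orthogonal_family_def)
    have "u i \<noteq> 0" using odd[of i] by auto
    hence "u i * u i > 0" by (auto simp: zero_less_mult_iff linorder_neq_iff)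
    hence "u i * u i \<ge> 1" by linarith
    from mult_right_mono[OF this, of "zdot (v i) (v i)"] a
    show "zdot (v i) (v i) \<le> u i * u i * zdot (v i) (v i)" by simp
  qed
  finally show ?thesis .
qed

theorem corollary2p6:
  fixes v :: "'n::finite \<Rightarrow> int ^ 'n"
  assumes "orthogonal_family v"
    and "I_S v > int CARD('n) - 3 * int (card {i. odd (wu_element v $ i)})"
  shows "\<not> cubiquitous (lattice_gen v)"
proof
  assume cub: "cubiquitous (lattice_gen v)"
  define W where "W = wu_element v"
  have Wj: "W $ j = (\<Sum>i\<in>UNIV. v i $ j)" for j
    unfolding W_def wu_element_def by (simp add: sum_component)
  define x :: "int ^ 'n" where "x = (\<chi> j. if odd (W $ j) then (W $ j - 1) div 2 else W $ j div 2)"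
  obtain y where yL: "y \<in> lattice_gen v" and yx: "\<And>j. y $ j - x $ j \<in> {0, 1}"
    using cub unfolding cubiquitous_def by blast
  obtain c :: "'n \<Rightarrow> int" where yc: "y = (\<Sum>i\<in>UNIV. c i *s v i)"
    using yL unfolding lattice_gen_def by blast
  have yj: "y $ j = (\<Sum>i\<in>UNIV. c i * v i $ j)" for j
    unfolding yc by (simp add: sum_component)
  define u where "u i = 1 - 2 * c i" for i
  have zj: "W $ j - 2 * y $ j = (\<Sum>i\<in>UNIV. u i * v i $ j)" for j
    unfolding Wj yj u_def by (simp add: algebra_simps sum_subtractf sum_distrib_left)
  have low: "(\<Sum>j\<in>UNIV. (W $ j - 2 * y $ j)^2) \<ge> (\<Sum>i\<in>UNIV. zdot (v i) (v i))"
    unfolding zj by (rule norm_lower[OF assms(1)]) (simp add: u_def)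
  have bnd: "(W $ j - 2 * y $ j)^2 \<le> (if odd (W $ j) then 1 else 4)" for j
  proof -
    have "y $ j - x $ j \<in> {0, 1}" by (rule yx)
    moreover have "x $ j = (if odd (W $ j) then (W $ j - 1) div 2 else W $ j div 2)"
      unfolding x_def by simp
    ultimately show ?thesis
    proof -
      obtain d where d: "y $ j = x $ j + d" "d \<in> {0,1}" using yx[of j] by force
      show ?thesis using d \<open>x $ j = _\<close>
        by (cases "odd (W $ j)") (auto elim!: oddE evenE simp: power2_eq_square)
    qed
  qed
  have "(\<Sum>j\<in>UNIV. (W $ j - 2 * y $ j)^2) \<le> (\<Sum>j\<in>UNIV. (if odd (W $ j) then 1 else 4 :: int))"
    by (rule sum_mono) (rule bnd)
  also have "\<dots> = (\<Sum>j\<in>UNIV. 4 - 3 * (if odd (W $ j) then 1 else 0 :: int))"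
    by (rule sum.cong) auto
  also have "\<dots> = 4 * int CARD('n) - 3 * int (card {j. odd (W $ j)})"
    by (simp add: sum_subtractf sum_distrib_left[symmetric] sum.If_cases)
  finally have "(\<Sum>i\<in>UNIV. zdot (v i) (v i)) \<le> 4 * int CARD('n) - 3 * int (card {j. odd (W $ j)})"
    using low by linarith
  moreover have "I_S v = (\<Sum>i\<in>UNIV. zdot (v i) (v i)) - 3 * int CARD('n)"
    unfolding I_S_def by (simp add: sum_subtractf)
  ultimately show False using assms(2) unfolding W_def by linarith
qed

end
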